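(* Let $\Omega$ be a domain in $\mathbb{R}^n$ ($n\geq 2$), let $u$ be an upper semicontinuous function on $\Omega$, let $v$ be a subharmonic function in $\Omega$, and let $K$ be a Borel subset of $\Omega$. Let $h:(0,+\infty)\to(0,+\infty)$ be a function such that there are real numbers $M>0$ and $c>4$ satisfying $$\int_0^{c\epsilon}\frac{h(r)}{r^{n-1}}\,dr\leq M\frac{h(\epsilon)}{\epsilon^{n-2}}$$ for all sufficiently small $\epsilon>0$. Suppose that there exist a positive Borel measure $\mu$, real numbers $A,B>0$, $\epsilon_0>0$, and a set $N\subset K$ such that: 1. $\mu(N)=0$; 2. $A\,h(\epsilon)\leq\mu\big(K\cap\mathbb{B}(x,\epsilon)\big)\leq B\,h(\epsilon)$ for all $x\in K$ and all $\epsilon<\epsilon_0$; 3. $u\geq v$ on $K\setminus N$. Then $u\geq v$ on $K$.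
   Context: $\mathbb{B}(x,r)$ denotes the open ball in $\mathbb{R}^n$ with center $x$ and radius $r$. A function $v:\Omega\to[-\infty,+\infty)$ is subharmonic if it is upper semicontinuous, not identically $-\infty$, and for every relatively compact open $G\subset\Omega$ and every $\varphi$ harmonic on $G$ and continuous on $\bar G$, $v\leq\varphi$ on $\partial G$ implies $v\leq\varphi$ on $G$. *)

theory Defs
  imports "HOL-Analysis.Analysis"
begin

definition usc_on :: "'a::topological_space set \<Rightarrow> ('a \<Rightarrow> ereal) \<Rightarrow> bool" where
  "usc_on S u \<longleftrightarrow> (\<forall>x\<in>S. \<forall>c. u x < c \<longrightarrow> (\<forall>\<^sub>F y in at x within S. u y < c))"

definition harmonic_on :: "'a::euclidean_space set \<Rightarrow> ('a \<Rightarrow> real) \<Rightarrow> bool" where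
  "harmonic_on G \<phi> \<longleftrightarrow> open G \<and>
     (\<exists>D :: 'a \<Rightarrow> ('a \<Rightarrow>\<^sub>L real). \<exists>D2 :: 'a \<Rightarrow> ('a \<Rightarrow>\<^sub>L ('a \<Rightarrow>\<^sub>L real)).
        (\<forall>x\<in>G. (\<phi> has_derivative blinfun_apply (D x)) (at x)) \<and>
        (\<forall>x\<in>G. (D has_derivative blinfun_apply (D2 x)) (at x)) \<and>
        continuous_on G D2 \<and>
        (\<forall>x\<in>G. (\<Sum>i\<in>Basis. blinfun_apply (blinfun_apply (D2 x) i) i) = 0))"

definition subharmonic_on :: "'a::euclidean_space set \<Rightarrow> ('a \<Rightarrow> ereal) \<Rightarrow> bool" where
  "subharmonic_on \<Omega> v \<longleftrightarrow>
     usc_on \<Omega> v \<and> (\<forall>x\<in>\<Omega>. v x \<noteq> \<infinity>) \<and> (\<exists>x\<in>\<Omega>. v x \<noteq> -\<infinity>) \<and>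
     (\<forall>G \<phi>. open G \<and> compact (closure G) \<and> closure G \<subseteq> \<Omega> \<and>
            harmonic_on G \<phi> \<and> continuous_on (closure G) \<phi> \<and>
            (\<forall>x\<in>frontier G. v x \<le> ereal (\<phi> x))
            \<longrightarrow> (\<forall>x\<in>G. v x \<le> ereal (\<phi> x)))"

end

theory Submission
  imports Defs
begin
lemma harmonic_kernel:
  fixes z :: "'a::euclidean_space" and F F1 F2 :: "real \<Rightarrow> real"
  assumes F: "\<And>t. t>0 \<Longrightarrow> (F has_real_derivative F1 t) (at t)"
      and F1: "\<And>t. t>0 \<Longrightarrow> (F1 has_real_derivative F2 t) (at t)"
      and F2c: "continuous_on {0<..} F2"
      and eq: "\<And>t. t>0 \<Longrightarrow> 2*t*F2 t + DIM('a) * F1 t = 0"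
  shows "harmonic_on (-{z}) (\<lambda>y. F ((y-z)\<bullet>(y-z)))"
proof -
  define q where "q y = (y-z)\<bullet>(y-z)" for y
  have qpos: "q y > 0" if "y \<in> -{z}" for y using that by (simp add: q_def)
  have dq: "(q has_derivative (\<lambda>h. (y-z)\<bullet>h + h\<bullet>(y-z))) (at y)" for y
    unfolding q_def by (auto intro!: derivative_eq_intros)
  have F1c: "continuous_on {0<..} F1"
    using F1 by (meson DERIV_isCont continuous_at_imp_continuous_on greaterThan_iff)
  define J :: "'a \<Rightarrow>\<^sub>L ('a \<Rightarrow>\<^sub>L real)" where "J = Blinfun blinfun_inner_left"
  have J: "blinfun_apply J h = blinfun_inner_left h" for h
    unfolding J_def by (simp add: bounded_linear_Blinfun_apply bounded_linear_blinfun_inner_left)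
  define Ou :: "'a \<Rightarrow> 'a \<Rightarrow>\<^sub>L ('a \<Rightarrow>\<^sub>L real)" where
    "Ou w = blinfun_scaleR_left (blinfun_inner_left w) o\<^sub>L blinfun_inner_left w" for w
  define D where "D y = (2 * F1 (q y)) *\<^sub>R blinfun_inner_left (y-z)" for y
  define D2 where "D2 y = (4 * F2 (q y)) *\<^sub>R Ou (y - z) + (2 * F1 (q y)) *\<^sub>R J" for y
  show ?thesis unfolding harmonic_on_def
  proof (intro conjI exI[of _ D] exI[of _ D2] ballI)
    show "open (- {z} :: 'a set)" by auto
  next
    fix y :: 'a assume y: "y \<in> -{z}"
    have "((\<lambda>y. F (q y)) has_derivative (\<lambda>h. F1 (q y) * ((y-z)\<bullet>h + h\<bullet>(y-z)))) (at y)"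
      using has_derivative_compose[OF dq F[OF qpos[OF y], unfolded has_field_derivative_def]]
      by (simp add: o_def mult.commute)
    then show "((\<lambda>y. F ((y-z)\<bullet>(y-z))) has_derivative blinfun_apply (D y)) (at y)"
      unfolding q_def by (rule has_derivative_eq_rhs) (auto simp: D_def q_def blinfun.scaleR_left inner_diff_right inner_commute algebra_simps)
  next
    fix y :: 'a assume y: "y \<in> -{z}"
    have d1: "((\<lambda>y. 2 * F1 (q y)) has_derivative (\<lambda>h. 2 * (F2 (q y) * ((y-z)\<bullet>h + h\<bullet>(y-z))))) (at y)"
      using has_derivative_compose[OF dq F1[OF qpos[OF y], unfolded has_field_derivative_def]]
      by (auto intro!: derivative_eq_intros simp: o_def mult.commute)
    have d2: "((\<lambda>y. blinfun_inner_left (y-z)) has_derivative (\<lambda>h. blinfun_inner_left h)) (at y)"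
      by (rule bounded_linear.has_derivative[OF bounded_linear_blinfun_inner_left])
         (auto intro!: derivative_eq_intros)
    show "(D has_derivative blinfun_apply (D2 y)) (at y)"
      unfolding D_def
      apply (rule has_derivative_eq_rhs[OF has_derivative_scaleR[OF d1 d2]])
      apply (rule ext, rule blinfun_eqI)
      by (simp add: D2_def Ou_def J blinfun.scaleR_left blinfun.add_left inner_diff_left inner_commute algebra_simps)
  next
    show "continuous_on (- {z}) D2"
      unfolding D2_def Ou_def
      apply (intro continuous_intros continuous_on_compose2[OF F2c] continuous_on_compose2[OF F1c])
      by (auto simp: q_def intro!: continuous_intros)
  next
    fix y :: 'a assume y: "y \<in> -{z}"
    have "(\<Sum>i\<in>Basis. blinfun_apply (blinfun_apply (D2 y) i) i)
        = 4 * F2 (q y) * (\<Sum>i\<in>Basis. ((y-z)\<bullet>i) * ((y-z)\<bullet>i)) + 2 * F1 (q y) * (\<Sum>i\<in>(Basis::'a set). i\<bullet>i)"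
    proof -
      have pt: "blinfun_apply (blinfun_apply (D2 y) i) i = 4 * F2 (q y) * (((y-z)\<bullet>i) * ((y-z)\<bullet>i)) + 2 * F1 (q y) * (i\<bullet>i)" for i
        by (simp add: D2_def Ou_def J blinfun.scaleR_left blinfun.add_left inner_commute)
      show ?thesis by (simp add: pt sum.distrib sum_distrib_left)
    qed
    also have "\<dots> = 4 * F2 (q y) * q y + 2 * F1 (q y) * DIM('a)"
      by (simp add: q_def euclidean_inner[symmetric])
    also have "\<dots> = 2 * (2 * q y * F2 (q y) + DIM('a) * F1 (q y))" by (simp add: algebra_simps)
    also have "\<dots> = 0" using eq[OF qpos[OF y]] by simp
    finally show "(\<Sum>i\<in>Basis. blinfun_apply (blinfun_apply (D2 y) i) i) = 0" .
  qed
qed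

lemma harmonic_on_cong:
  assumes "harmonic_on G f" "\<And>x. x \<in> G \<Longrightarrow> f x = g x"
  shows "harmonic_on G g"
proof -
  from assms(1) obtain D D2 where o: "open G" and
    d: "\<forall>x\<in>G. (f has_derivative blinfun_apply (D x)) (at x)" and
    r: "(\<forall>x\<in>G. (D has_derivative blinfun_apply (D2 x)) (at x)) \<and> continuous_on G D2 \<and>
        (\<forall>x\<in>G. (\<Sum>i\<in>Basis. blinfun_apply (blinfun_apply (D2 x) i) i) = 0)"
    unfolding harmonic_on_def by blast
  have "\<forall>x\<in>G. (g has_derivative blinfun_apply (D x)) (at x)"
    using d o assms(2) by (metis has_derivative_transform_within_open)
  then show ?thesis unfolding harmonic_on_def using o r by blast
qed

lemma harmonic_on_subset:
  assumes "harmonic_on G f" "open H" "H \<subseteq> G"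
  shows "harmonic_on H f"
  using assms unfolding harmonic_on_def by (meson continuous_on_subset subsetD)

lemma harmonic_on_const: "open G \<Longrightarrow> harmonic_on G (\<lambda>x. c)"
  unfolding harmonic_on_def
  by (intro conjI exI[of _ "\<lambda>x. 0"]) (auto intro!: derivative_eq_intros)

lemma harmonic_on_lin:
  assumes "harmonic_on G f" "harmonic_on G g"
  shows "harmonic_on G (\<lambda>x. a * f x + b * g x)"
proof -
  from assms(1) obtain D D2 where o: "open G" and
    d: "\<forall>x\<in>G. (f has_derivative blinfun_apply (D x)) (at x)" and
    d2: "\<forall>x\<in>G. (D has_derivative blinfun_apply (D2 x)) (at x)" and c: "continuous_on G D2" and
    t: "\<forall>x\<in>G. (\<Sum>i\<in>Basis. blinfun_apply (blinfun_apply (D2 x) i) i) = 0"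
    unfolding harmonic_on_def by blast
  from assms(2) obtain E E2 where
    e: "\<forall>x\<in>G. (g has_derivative blinfun_apply (E x)) (at x)" and
    e2: "\<forall>x\<in>G. (E has_derivative blinfun_apply (E2 x)) (at x)" and ce: "continuous_on G E2" and
    te: "\<forall>x\<in>G. (\<Sum>i\<in>Basis. blinfun_apply (blinfun_apply (E2 x) i) i) = 0"
    unfolding harmonic_on_def by blast
  show ?thesis unfolding harmonic_on_def
  proof (intro conjI exI[of _ "\<lambda>x. a *\<^sub>R D x + b *\<^sub>R E x"] exI[of _ "\<lambda>x. a *\<^sub>R D2 x + b *\<^sub>R E2 x"] ballI)
    show "open G" by fact
  next
    fix x assume x: "x \<in> G"
    show "((\<lambda>x. a * f x + b * g x) has_derivative blinfun_apply (a *\<^sub>R D x + b *\<^sub>R E x)) (at x)"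
      using d e x by (auto intro!: derivative_eq_intros simp: blinfun.add_left blinfun.scaleR_left)
    show "((\<lambda>x. a *\<^sub>R D x + b *\<^sub>R E x) has_derivative blinfun_apply (a *\<^sub>R D2 x + b *\<^sub>R E2 x)) (at x)"
      using d2 e2 x by (auto intro!: derivative_eq_intros simp: blinfun.add_left blinfun.scaleR_left)
    show "(\<Sum>i\<in>Basis. blinfun_apply (blinfun_apply (a *\<^sub>R D2 x + b *\<^sub>R E2 x) i) i) = 0"
      using t te x by (simp add: blinfun.add_left blinfun.scaleR_left sum.distrib sum_distrib_left[symmetric])
  next
    show "continuous_on G (\<lambda>x. a *\<^sub>R D2 x + b *\<^sub>R E2 x)"
      using c ce by (intro continuous_intros)
  qed
qed

lemma harmonic_on_sum:
  assumes "finite I" "open G" "\<And>i. i \<in> I \<Longrightarrow> harmonic_on G (f i)"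
  shows "harmonic_on G (\<lambda>x. \<Sum>i\<in>I. f i x)"
  using assms
proof (induction I rule: finite_induct)
  case empty then show ?case using harmonic_on_const[of G 0] by simp
next
  case (insert j I)
  have "harmonic_on G (\<lambda>x. 1 * f j x + 1 * (\<Sum>i\<in>I. f i x))"
    by (rule harmonic_on_lin) (use insert in auto)
  then show ?case using insert by simp
qed

definition Phi :: "nat \<Rightarrow> real \<Rightarrow> real \<Rightarrow> real" where
  "Phi n R d = (if n = 2 then ln R - ln d else (1/d^(n-2) - 1/R^(n-2)) / (real n - 2))"

lemma harmonic_Phi:
  assumes n: "DIM('a::euclidean_space) \<ge> 2"
  shows "harmonic_on (-{z}) (\<lambda>y::'a. Phi DIM('a) R (norm (y - z)))"
proof (cases "DIM('a) = 2")
  case True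
  have k: "harmonic_on (-{z}) (\<lambda>y::'a. ln ((y-z)\<bullet>(y-z)))"
    by (rule harmonic_kernel[where ?F1.0="\<lambda>t. 1/t" and ?F2.0="\<lambda>t. -1/t^2"])
       (auto intro!: derivative_eq_intros continuous_intros simp: True power2_eq_square field_simps)
  have "harmonic_on (-{z}) (\<lambda>y::'a. (-1/2) * ln ((y-z)\<bullet>(y-z)) + 1 * ln R)"
    by (rule harmonic_on_lin[OF k harmonic_on_const]) auto
  then show ?thesis
  proof (rule harmonic_on_cong)
    fix y :: 'a assume "y \<in> -{z}"
    then have "norm (y-z) = sqrt ((y-z)\<bullet>(y-z))" "(y-z)\<bullet>(y-z) > 0"
      by (auto simp: norm_eq_sqrt_inner)
    then show "(-1/2) * ln ((y-z)\<bullet>(y-z)) + 1 * ln R = Phi DIM('a) R (norm (y - z))"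
      by (simp add: Phi_def True ln_sqrt)
  qed
next
  case False
  define n where "n = DIM('a)"
  with False n have n3: "n \<ge> 3" by simp
  define \<alpha> where "\<alpha> = - (real n - 2) / 2"
  have k: "harmonic_on (-{z}) (\<lambda>y::'a. ((y-z)\<bullet>(y-z)) powr \<alpha>)"
  proof (rule harmonic_kernel[where ?F1.0="\<lambda>t. \<alpha> * t powr (\<alpha> - 1)" and ?F2.0="\<lambda>t. \<alpha> * ((\<alpha> - 1) * t powr (\<alpha> - 1 - 1))"])
    fix t :: real assume t: "t > 0"
    show "((\<lambda>t. t powr \<alpha>) has_real_derivative \<alpha> * t powr (\<alpha> - 1)) (at t)"
      using t by (auto intro!: derivative_eq_intros)
    show "((\<lambda>t. \<alpha> * t powr (\<alpha> - 1)) has_real_derivative \<alpha> * ((\<alpha> - 1) * t powr (\<alpha> - 1 - 1))) (at t)"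
      using t by (auto intro!: derivative_eq_intros)
    have "t * t powr (\<alpha> - 1 - 1) = t powr (\<alpha> - 1)"
      using t by (simp add: powr_diff power2_eq_square)
    then show "2 * t * (\<alpha> * ((\<alpha> - 1) * t powr (\<alpha> - 1 - 1))) + real DIM('a) * (\<alpha> * t powr (\<alpha> - 1)) = 0"
    proof -
      have e: "2 * t * (\<alpha> * ((\<alpha> - 1) * t powr (\<alpha> - 1 - 1))) = 2 * \<alpha> * (\<alpha> - 1) * (t * t powr (\<alpha> - 1 - 1))"
        by (simp add: algebra_simps)
      have "2 * \<alpha> * (\<alpha> - 1) + real n * \<alpha> = 0" unfolding \<alpha>_def by (simp add: field_simps)
      then have "(2 * \<alpha> * (\<alpha> - 1) + real n * \<alpha>) * t powr (\<alpha> - 1) = 0" by simp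
      then show ?thesis unfolding e \<open>t * t powr (\<alpha> - 1 - 1) = t powr (\<alpha> - 1)\<close> n_def
        by (simp add: algebra_simps)
    qed
  next
    show "continuous_on {0<..} (\<lambda>t. \<alpha> * ((\<alpha> - 1) * t powr (\<alpha> - 1 - 1)))"
      by (intro continuous_intros) auto
  qed
  have "harmonic_on (-{z}) (\<lambda>y::'a. (1/(real n - 2)) * ((y-z)\<bullet>(y-z)) powr \<alpha> + (-1/(real n - 2)/R^(n-2)) * 1)"
    by (rule harmonic_on_lin[OF k harmonic_on_const]) auto
  then show ?thesis
  proof (rule harmonic_on_cong)
    fix y :: 'a assume "y \<in> -{z}"
    then have p: "norm (y-z) > 0" by auto
    have q: "(y-z)\<bullet>(y-z) = norm (y-z) powr 2"
      using p by (simp add: power2_norm_eq_inner[symmetric] powr_realpow)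
    have "((y-z)\<bullet>(y-z)) powr \<alpha> = norm (y-z) powr (2 * \<alpha>)"
      unfolding q by (simp only: powr_powr)
    also have "\<dots> = norm (y-z) powr (- real (n-2))"
    proof -
      have "2 * \<alpha> = - real (n-2)" using n3 by (simp add: \<alpha>_def of_nat_diff)
      then show ?thesis by simp
    qed
    also have "\<dots> = 1 / norm (y-z) ^ (n-2)"
      using p by (simp add: powr_minus powr_realpow divide_inverse)
    finally show "1 / (real n - 2) * ((y-z)\<bullet>(y-z)) powr \<alpha> + (-1/(real n - 2)/R^(n-2)) * 1 = Phi DIM('a) R (norm (y - z))"
      using False by (simp add: Phi_def n_def[symmetric] diff_divide_distrib mult.commute)
  qed
qed

lemma inv_pow_deriv: "d > 0 \<Longrightarrow> k \<ge> 1 \<Longrightarrow> ((\<lambda>d::real. 1 / d^k) has_real_derivative -(real k / d^(k+1))) (at d)"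
  apply (rule derivative_eq_intros refl | simp)+
  apply (cases k, simp)
  apply (simp add: field_simps)
  done

lemma Phi_deriv:
  assumes n: "n \<ge> 2" and d: "d > 0"
  shows "((\<lambda>d. Phi n R d) has_real_derivative -(1/d^(n-1))) (at d)"
proof (cases "n = 2")
  case True
  have "((\<lambda>d. ln R - ln d) has_real_derivative -(1/d)) (at d)"
    using d by (auto intro!: derivative_eq_intros)
  then show ?thesis unfolding Phi_def using True by simp
next
  case False
  then have n3: "n \<ge> 3" using n by simp
  have "((\<lambda>d. (1/d^(n-2) - 1/R^(n-2)) / (real n - 2)) has_real_derivative
      (-(real (n-2) / d^(n-2+1)) - 0) / (real n - 2)) (at d)"
    using n3 d by (intro DERIV_cdivide DERIV_diff inv_pow_deriv DERIV_const) auto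
  moreover have "(-(real (n-2) / d^(n-2+1)) - 0) / (real n - 2) = -(1/d^(n-1))"
  proof -
    have "real n - 2 \<noteq> 0" "real (n-2) = real n - 2" "n-2+1 = n-1" using n3 by (auto simp: of_nat_diff)
    then show ?thesis using d by simp
  qed
  ultimately show ?thesis unfolding Phi_def using False by simp
qed

lemma Phi_R: "R > 0 \<Longrightarrow> Phi n R R = 0"
  by (simp add: Phi_def)

lemma Phi_mono:
  assumes n: "n \<ge> 2" and d: "0 < d" "d \<le> d'"
  shows "Phi n R d' \<le> Phi n R d"
proof (cases "d = d'")
  case False
  then have "d < d'" using d by simp
  have der: "\<And>x. d \<le> x \<Longrightarrow> x \<le> d' \<Longrightarrow> DERIV (Phi n R) x :> -(1/x^(n-1))"
    using Phi_deriv[OF n] d(1) by simp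
  from MVT2[OF \<open>d < d'\<close> der] obtain z where
    "d < z" "z < d'" "Phi n R d' - Phi n R d = (d' - d) * -(1/z^(n-1))"
    by blast
  moreover have "(d' - d) * (1/z^(n-1)) \<ge> 0" using \<open>d < d'\<close> \<open>d < z\<close> d by simp
  ultimately show ?thesis by simp
qed simp

lemma Phi_nonneg:
  assumes n: "n \<ge> 2" and d: "0 < d" "d \<le> R"
  shows "0 \<le> Phi n R d"
  using Phi_mono[OF n d, where R=R] Phi_R[of R n] d by simp

lemma Phi_diff:
  assumes n: "n \<ge> 2" and s: "0 < s"
  shows "s / (2 * s)^(n-1) \<le> Phi n R s - Phi n R (2 * s)"
proof -
  have "s < 2 * s" using s by simp
  have der: "\<And>x. s \<le> x \<Longrightarrow> x \<le> 2 * s \<Longrightarrow> DERIV (Phi n R) x :> -(1/x^(n-1))"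
    using Phi_deriv[OF n] s by simp
  from MVT2[OF \<open>s < 2 * s\<close> der] obtain z where
    z: "s < z" "z < 2 * s" "Phi n R (2 * s) - Phi n R s = (2 * s - s) * -(1/z^(n-1))"
    by blast
  have "1/(2 * s)^(n-1) \<le> 1/z^(n-1)"
    using z s by (intro divide_left_mono power_mono) auto
  then have "s * (1/(2 * s)^(n-1)) \<le> s * (1/z^(n-1))" using s by (intro mult_left_mono) auto
  then show ?thesis using z(3) by simp
qed

lemma Phi_integral:
  assumes n: "n \<ge> 2" and d: "0 < d" "d \<le> R"
  shows "(\<integral>\<^sup>+ r. ennreal (indicator {d..R} r * (1 / r^(n-1))) \<partial>lborel) = ennreal (Phi n R d)"
proof -
  have "((\<lambda>r. 1 / r^(n-1)) has_integral ((- Phi n R R) - (- Phi n R d))) {d..R}"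
  proof (rule fundamental_theorem_of_calculus[OF d(2)])
    fix x assume "x \<in> {d..R}"
    then have "x > 0" using d by auto
    then show "((\<lambda>x. - Phi n R x) has_vector_derivative 1 / x ^ (n - 1)) (at x within {d..R})"
    proof -
      have "((\<lambda>x. - Phi n R x) has_real_derivative - (-(1/x^(n-1)))) (at x)"
        using Phi_deriv[OF n \<open>x > 0\<close>, of R] by (rule DERIV_minus)
      then have "((\<lambda>x. - Phi n R x) has_real_derivative 1/x^(n-1)) (at x within {d..R})"
        by (simp add: has_field_derivative_at_within)
      then show ?thesis by (simp add: has_real_derivative_iff_has_vector_derivative)
    qed
  qed
  then have "((\<lambda>r. 1 / r^(n-1)) has_integral Phi n R d) {d..R}"
    using Phi_R[of R n] d by simp
  from nn_integral_has_integral_lebesgue[OF _ this] show ?thesis using d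
    by (simp add: mult.commute)
qed

lemma finite_partition_small:
  fixes C :: "'a::euclidean_space set"
  assumes C: "C \<subseteq> cball x0 s" "C \<in> sets borel" and eta: "\<eta> > 0"
  obtains I :: "nat set" and D :: "nat \<Rightarrow> 'a set" where "finite I" "disjoint_family_on D I"
    "\<And>i. i\<in>I \<Longrightarrow> D i \<in> sets borel" "\<And>i. i\<in>I \<Longrightarrow> D i \<noteq> {}" "(\<Union>i\<in>I. D i) = C"
    "\<And>i p q. i\<in>I \<Longrightarrow> p \<in> D i \<Longrightarrow> q \<in> D i \<Longrightarrow> dist p q < 2*\<eta>"
proof -
  have "cball x0 s \<subseteq> (\<Union>c\<in>cball x0 s. ball c \<eta>)" using eta by auto
  from compactE_image[OF compact_cball open_ball this] obtain T where
    T: "finite T" "cball x0 s \<subseteq> (\<Union>c\<in>T. ball c \<eta>)" by metis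
  from T(1) obtain k f where Tf: "T = f ` {i::nat. i < k}" unfolding finite_conv_nat_seg_image by metis
  define A where "A j = C \<inter> ball (f j) \<eta>" for j
  define D' where "D' = disjointed A"
  define I where "I = {j\<in>{0..<k}. D' j \<noteq> {}}"
  have AB: "A j \<in> sets borel" for j unfolding A_def using C(2) by auto
  have DB: "D' j \<in> sets borel" for j
    unfolding D'_def disjointed_def using AB by (intro sets.Diff sets.finite_UN) auto
  have U: "(\<Union>i\<in>I. D' i) = C"
  proof -
    have "(\<Union>i\<in>I. D' i) = (\<Union>i\<in>{0..<k}. D' i)" unfolding I_def by auto
    also have "\<dots> = (\<Union>i\<in>{0..<k}. A i)" unfolding D'_def by (rule finite_UN_disjointed_eq)
    also have "\<dots> = C"
    proof
      show "(\<Union>i\<in>{0..<k}. A i) \<subseteq> C" unfolding A_def by auto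
      show "C \<subseteq> (\<Union>i\<in>{0..<k}. A i)"
      proof
        fix x assume "x \<in> C"
        then have "x \<in> (\<Union>c\<in>T. ball c \<eta>)" using C(1) T(2) by blast
        then obtain i where "i < k" "x \<in> ball (f i) \<eta>" unfolding Tf by auto
        then show "x \<in> (\<Union>i\<in>{0..<k}. A i)" using \<open>x \<in> C\<close> unfolding A_def by auto
      qed
    qed
    finally show ?thesis .
  qed
  show ?thesis
  proof (rule that[of I D'])
    show "finite I" unfolding I_def by auto
    show "disjoint_family_on D' I" unfolding D'_def
      by (rule disjoint_family_on_mono[OF subset_UNIV disjoint_family_disjointed])
    show "D' i \<in> sets borel" for i by (rule DB)
    show "D' i \<noteq> {}" if "i \<in> I" for i using that unfolding I_def by auto
    show "(\<Union>i\<in>I. D' i) = C" by (rule U)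
    fix i p q assume "i \<in> I" "p \<in> D' i" "q \<in> D' i"
    then have "p \<in> ball (f i) \<eta>" "q \<in> ball (f i) \<eta>"
      using disjointed_subset[of A i] unfolding D'_def A_def by auto
    then show "dist p q < 2*\<eta>"
      using dist_triangle[of p q "f i"] by (simp add: dist_commute)
  qed
qed

lemma open_inner_set: "open {y. \<exists>r>\<rho>. ball y r \<subseteq> U}"
proof (rule openI)
  fix y assume "y \<in> {y. \<exists>r>\<rho>. ball y r \<subseteq> U}"
  then obtain r where r: "r > \<rho>" "ball y r \<subseteq> U" by auto
  show "\<exists>e>0. ball y e \<subseteq> {y. \<exists>r>\<rho>. ball y r \<subseteq> U}"
  proof (intro exI conjI)
    show "r - \<rho> > 0" using r by simp
    show "ball y (r - \<rho>) \<subseteq> {y. \<exists>r>\<rho>. ball y r \<subseteq> U}"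
    proof
      fix y' assume y': "y' \<in> ball y (r - \<rho>)"
      have "ball y' (r - dist y y') \<subseteq> ball y r"
        by (auto simp: dist_commute) (metis add.commute dist_triangle less_diff_eq order_le_less_trans)
      then show "y' \<in> {y. \<exists>r>\<rho>. ball y r \<subseteq> U}" using y' r by (auto intro!: exI[of _ "r - dist y y'"])
    qed
  qed
qed

lemma usc_open:
  fixes \<Omega> :: "'a::metric_space set"
  assumes "open \<Omega>" "usc_on \<Omega> v"
  shows "open {y\<in>\<Omega>. v y < c}"
  unfolding open_contains_ball
proof (intro ballI)
  fix x assume x: "x \<in> {y\<in>\<Omega>. v y < c}"
  then have "\<forall>\<^sub>F y in at x within \<Omega>. v y < c" using assms(2) unfolding usc_on_def by auto
  then have "\<forall>\<^sub>F y in at x. v y < c" using at_within_open[of x \<Omega>] x assms(1) by simp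
  then obtain S where S: "open S" "x \<in> S" "\<forall>y\<in>S. y \<noteq> x \<longrightarrow> v y < c"
    unfolding eventually_at_topological by blast
  have "open (S \<inter> \<Omega>)" "x \<in> S \<inter> \<Omega>" using S assms(1) x by auto
  then obtain e where "e > 0" "ball x e \<subseteq> S \<inter> \<Omega>" using open_contains_ball by blast
  then show "\<exists>e>0. ball x e \<subseteq> {y\<in>\<Omega>. v y < c}" using S x by (intro exI[of _ e]) auto
qed

lemma nn_integral_cmult_le_any:
  assumes c: "c \<ge> 0"
  shows "(\<integral>\<^sup>+x. ennreal c * f x \<partial>M) \<le> ennreal c * integral\<^sup>N M f"
proof (cases "c = 0")
  case True then show ?thesis by simp
next
  case False
  then have c0: "ennreal c \<noteq> 0" "ennreal c \<noteq> top" using c by auto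
  show ?thesis unfolding nn_integral_def
  proof (rule SUP_least)
    fix g assume g: "g \<in> {g. simple_function M g \<and> g \<le> (\<lambda>x. ennreal c * f x)}"
    define g' where "g' x = g x / ennreal c" for x
    have sg': "simple_function M g'"
      using simple_function_compose[of M g "\<lambda>y. y / ennreal c"] g unfolding g'_def o_def by auto
    have "g' x \<le> f x" for x
    proof -
      have "g x \<le> f x * ennreal c" using g by (auto simp: le_fun_def mult.commute)
      then have "g x / ennreal c \<le> (f x * ennreal c) / ennreal c" by (rule divide_right_mono_ennreal)
      then show ?thesis unfolding g'_def using mult_divide_eq_ennreal[OF c0] by simp
    qed
    then have g'f: "g' \<le> f" by (simp add: le_fun_def)
    have geq: "g = (\<lambda>x. ennreal c * g' x)"
      unfolding g'_def by (rule ext) (simp add: ennreal_times_divide mult.commute[of "ennreal c"] mult_divide_eq_ennreal[OF c0])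
    have "integral\<^sup>S M g = ennreal c * integral\<^sup>S M g'"
      by (subst geq) (simp add: sg')
    also have "\<dots> \<le> ennreal c * (SUP g \<in> {g. simple_function M g \<and> g \<le> f}. integral\<^sup>S M g)"
      using sg' g'f by (intro mult_left_mono SUP_upper) auto
    finally show "integral\<^sup>S M g \<le> ennreal c * (SUP g \<in> {g. simple_function M g \<and> g \<le> f}. integral\<^sup>S M g)" .
  qed
qed


lemma harmonic_on_continuous: "harmonic_on G f \<Longrightarrow> continuous_on G f"
  unfolding harmonic_on_def
  by (metis continuous_at_imp_continuous_on has_derivative_continuous)

lemma inner_approx:
  fixes E U :: "'b::metric_space set"
  assumes E: "E \<in> sets M" "E \<subseteq> U" "open U" and Eb: "\<And>\<rho>. E \<inter> {y. \<exists>r>\<rho>. ball y r \<subseteq> U} \<in> sets M"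
    and pos: "0 < emeasure M E" "emeasure M E < \<infinity>"
  shows "\<exists>\<rho>>0. emeasure M E / 2 < emeasure M (E \<inter> {y. \<exists>r>\<rho>. ball y r \<subseteq> U})"
proof -
  define C where "C j = E \<inter> {y. \<exists>r>1 / real (Suc j). ball y r \<subseteq> U}" for j
  have inc: "incseq C"
  proof (rule incseq_SucI)
    fix j
    have "1 / real (Suc (Suc j)) \<le> 1 / real (Suc j)" by (simp add: frac_le)
    then show "C j \<subseteq> C (Suc j)" unfolding C_def by (auto intro: le_less_trans)
  qed
  have UC: "(\<Union>j. C j) = E"
  proof
    show "(\<Union>j. C j) \<subseteq> E" unfolding C_def by auto
    show "E \<subseteq> (\<Union>j. C j)"
    proof
      fix y assume "y \<in> E"
      then have "y \<in> U" using E by auto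
      then obtain e where e: "e > 0" "ball y e \<subseteq> U" using E(3) open_contains_ball by blast
      then obtain j where "1 / real (Suc j) < e"
        using reals_Archimedean[OF e(1)] by (auto simp: inverse_eq_divide)
      then show "y \<in> (\<Union>j. C j)" using e \<open>y \<in> E\<close> unfolding C_def by blast
    qed
  qed
  have "(\<lambda>j. emeasure M (C j)) \<longlonglongrightarrow> emeasure M E"
  proof -
    have "range C \<subseteq> sets M" using Eb unfolding C_def by auto
    from Lim_emeasure_incseq[OF this inc] show ?thesis unfolding UC .
  qed
  moreover have "emeasure M E / 2 < emeasure M E"
  proof -
    obtain q where q: "emeasure M E = ennreal q" "q \<ge> 0" using pos(2) by (cases "emeasure M E") auto
    then have "q > 0" using pos(1) by (cases "q = 0") auto
    have "ennreal q / 2 = ennreal (q / 2)" using q(2) by (rule ennreal_divide_numeral)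
    then show ?thesis using q \<open>q > 0\<close> by (simp add: ennreal_less_iff)
  qed
  ultimately have "eventually (\<lambda>j. emeasure M E / 2 < emeasure M (C j)) sequentially"
    by (rule order_tendstoD(1))
  then obtain j where "emeasure M E / 2 < emeasure M (C j)" by (metis eventually_sequentially order_refl)
  then show ?thesis unfolding C_def by (intro exI[of _ "1 / real (Suc j)"]) auto
qed

locale thm2 =
  fixes \<Omega> K N :: "'a::euclidean_space set" and v :: "'a \<Rightarrow> ereal" and h :: "real \<Rightarrow> real"
    and \<mu> :: "'a measure" and A B \<epsilon>\<^sub>0 M c s1 :: real and x0 :: 'a
  assumes dim: "DIM('a) \<ge> 2" and o\<Omega>: "open \<Omega>" and v_sh: "subharmonic_on \<Omega> v"
    and K_borel: "K \<in> sets borel" and K_sub: "K \<subseteq> \<Omega>" and h_pos: "\<forall>r>0. h r > 0"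
    and mu_borel: "sets \<mu> = sets (restrict_space borel \<Omega>)"
    and A_pos: "A > 0" and B_pos: "B > 0" and eps0_pos: "\<epsilon>\<^sub>0 > 0"
    and N_sub: "N \<subseteq> K" and N_null: "N \<in> null_sets \<mu>"
    and growth: "\<forall>x\<in>K. \<forall>\<epsilon>. 0 < \<epsilon> \<and> \<epsilon> < \<epsilon>\<^sub>0 \<longrightarrow>
        ennreal (A * h \<epsilon>) \<le> emeasure \<mu> (K \<inter> ball x \<epsilon>) \<and>
        emeasure \<mu> (K \<inter> ball x \<epsilon>) \<le> ennreal (B * h \<epsilon>)"
    and M_pos: "M > 0" and c4: "c > 4" and s1_pos: "s1 > 0"
    and hc: "\<And>\<epsilon>. 0 < \<epsilon> \<Longrightarrow> \<epsilon> < s1 \<Longrightarrow>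
        (\<integral>\<^sup>+ r\<in>{0<..c * \<epsilon>}. ennreal (h r / r ^ (DIM('a) - 1)) \<partial>lborel)
          \<le> ennreal (M * h \<epsilon> / \<epsilon> ^ (DIM('a) - 2))"
    and x0K: "x0 \<in> K"

context thm2
begin

lemma sets_mu: "S \<in> sets borel \<Longrightarrow> S \<subseteq> \<Omega> \<Longrightarrow> S \<in> sets \<mu>"
  using mu_borel sets_restrict_space_iff[of \<Omega> borel S] o\<Omega> by auto

lemma Kball_sets: "K \<inter> ball y r \<in> sets \<mu>"
  using K_borel K_sub by (intro sets_mu) auto

lemma quasi:
  assumes "0 < t" "t \<le> t'" "t' < \<epsilon>\<^sub>0"
  shows "A * h t \<le> B * h t'"
proof -
  have "ennreal (A * h t) \<le> emeasure \<mu> (K \<inter> ball x0 t)" using growth x0K assms by auto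
  also have "\<dots> \<le> emeasure \<mu> (K \<inter> ball x0 t')"
    using assms by (intro emeasure_mono Kball_sets) auto
  also have "\<dots> \<le> ennreal (B * h t')" using growth x0K assms by auto
  finally have "ennreal (A * h t) \<le> ennreal (B * h t')" .
  moreover have "h t' > 0" using h_pos assms by auto
  then have "0 \<le> B * h t'" using B_pos by simp
  ultimately show ?thesis by simp
qed

lemma Kball_le:
  assumes "0 < r" "2 * r < \<epsilon>\<^sub>0"
  shows "emeasure \<mu> (K \<inter> ball y r) \<le> ennreal (B * h (2 * r))"
proof (cases "K \<inter> ball y r = {}")
  case True then show ?thesis by simp
next
  case False
  then obtain x where x: "x \<in> K" "dist y x < r" by auto
  have "K \<inter> ball y r \<subseteq> K \<inter> ball x (2 * r)"
  proof
    fix p assume "p \<in> K \<inter> ball y r"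
    then have "p \<in> K" "dist y p < r" by auto
    moreover have "dist x p \<le> dist y x + dist y p" by (metis dist_commute dist_triangle)
    ultimately show "p \<in> K \<inter> ball x (2 * r)" using x by auto
  qed
  then have "emeasure \<mu> (K \<inter> ball y r) \<le> emeasure \<mu> (K \<inter> ball x (2 * r))"
    by (intro emeasure_mono Kball_sets)
  also have "\<dots> \<le> ennreal (B * h (2 * r))" using growth x assms by auto
  finally show ?thesis .
qed

lemma doubling:
  assumes s: "0 < s" "s < s1" "c * s < \<epsilon>\<^sub>0"
  shows "h (c * s / 2) \<le> (2 * M * B * c ^ (DIM('a) - 2) / A) * h s"
proof -
  define n where "n = DIM('a)"
  define t where "t = c * s / 2"
  have cs0: "c * s > 0" using s(1) c4 by simp
  have t: "0 < t" "t < c * s" using cs0 unfolding t_def by auto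
  define k where "k = A * h t / B / (c * s) ^ (n - 1)"
  have ht: "h t > 0" using h_pos t by auto
  have kpos: "k \<ge> 0" unfolding k_def using A_pos B_pos ht cs0 by simp
  have pt: "ennreal k * indicator {t<..c * s} r \<le> ennreal (h r / r ^ (n - 1)) * indicator {0<..c * s} r" for r
  proof (cases "r \<in> {t<..c * s}")
    case True
    then have r: "t < r" "r \<le> c * s" by auto
    have "A * h t \<le> B * h r" using quasi[of t r] t r s by linarith
    then have h1: "A * h t / B \<le> h r" using B_pos by (simp add: pos_divide_le_eq mult.commute)
    have r0: "r > 0" using r t by linarith
    have "r ^ (n - 1) \<le> (c * s) ^ (n - 1)" using r r0 by (intro power_mono) auto
    moreover have "0 \<le> A * h t / B" using A_pos B_pos ht by simp
    moreover have "0 < r ^ (n - 1)" using r0 by simp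
    ultimately have "k \<le> h r / r ^ (n - 1)"
      unfolding k_def using h1 by (intro frac_le) auto
    moreover have "r \<in> {0<..c * s}" using r0 r by simp
    ultimately show ?thesis using True by (simp add: indicator_def ennreal_leI)
  qed (simp add: indicator_def)
  have "ennreal k * ennreal (c * s - t) = (\<integral>\<^sup>+ r. ennreal k * indicator {t<..c * s} r \<partial>lborel)"
    using t by (simp add: nn_integral_cmult_indicator)
  also have "\<dots> \<le> (\<integral>\<^sup>+ r\<in>{0<..c * s}. ennreal (h r / r ^ (n - 1)) \<partial>lborel)"
    by (intro nn_integral_mono) (use pt in auto)
  also have "\<dots> \<le> ennreal (M * h s / s ^ (n - 2))" using hc s unfolding n_def by auto
  finally have le0: "ennreal (k * (c * s - t)) \<le> ennreal (M * h s / s ^ (n - 2))"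
    using kpos t by (simp add: ennreal_mult[symmetric])
  have hs: "h s > 0" using h_pos s by auto
  have "0 \<le> M * h s / s ^ (n - 2)" using M_pos hs s by simp
  with le0 have le: "k * (c * s - t) \<le> M * h s / s ^ (n - 2)" by simp
  have cs: "(c * s) ^ (n - 1) = (c * s) * (c ^ (n - 2) * s ^ (n - 2))"
  proof -
    have "n - 1 = Suc (n - 2)" using dim unfolding n_def by simp
    then show ?thesis by (simp add: power_mult_distrib)
  qed
  have "k * (c * s - t) = A * h t / (2 * B * c ^ (n - 2) * s ^ (n - 2))"
    unfolding k_def cs using s c4 B_pos by (simp add: t_def field_simps)
  with le have "A * h t / (2 * B * c ^ (n - 2) * s ^ (n - 2)) \<le> M * h s / s ^ (n - 2)" by simp
  then have "A * h t \<le> (M * h s / s ^ (n - 2)) * (2 * B * c ^ (n - 2) * s ^ (n - 2))"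
    using s c4 B_pos by (simp add: divide_le_eq mult.commute)
  then have "A * h t \<le> 2 * M * B * c ^ (n - 2) * h s" using s by (simp add: field_simps)
  then show ?thesis using A_pos unfolding t_def n_def by (simp add: field_simps)
qed

lemma potential_bound:
  fixes I :: "nat set" and D :: "nat \<Rightarrow> 'a set" and z :: "nat \<Rightarrow> 'a"
  assumes I: "finite I" "disjoint_family_on D I" "\<And>i. i\<in>I \<Longrightarrow> D i \<in> sets \<mu>"
    "\<And>i. i\<in>I \<Longrightarrow> D i \<subseteq> K" "\<And>i. i\<in>I \<Longrightarrow> emeasure \<mu> (D i) \<noteq> \<infinity>"
    and rho: "\<rho> > 0" "\<And>i p. i\<in>I \<Longrightarrow> p \<in> D i \<Longrightarrow> dist p (z i) < \<rho>"
    and y: "\<And>i. i\<in>I \<Longrightarrow> \<rho> \<le> dist y (z i)" "\<And>i. i\<in>I \<Longrightarrow> dist y (z i) \<le> R1"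
    and R1: "4 * R1 < \<epsilon>\<^sub>0"
  shows "ennreal (\<Sum>i\<in>I. measure \<mu> (D i) * Phi DIM('a) R1 (dist y (z i)))
     \<le> ennreal (B * 4^(DIM('a)-2)) * (\<integral>\<^sup>+ t\<in>{0<..4*R1}. ennreal (h t / t^(DIM('a)-1)) \<partial>lborel)"
proof -
  define n where "n = DIM('a)"
  have n2: "n \<ge> 2" using dim by (simp add: n_def)
  define d where "d i = dist y (z i)" for i
  define m where "m i = measure \<mu> (D i)" for i
  have m0: "m i \<ge> 0" for i by (simp add: m_def)
  have d0: "d i > 0" if "i \<in> I" for i using y(1)[OF that] rho(1) unfolding d_def by linarith
  have dR: "d i \<le> R1" if "i \<in> I" for i using y(2)[OF that] by (simp add: d_def)
  define f where "f i r = indicator {d i..R1} r * (1 / r^(n-1))" for i r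
  define g where "g r = (\<Sum>i\<in>I. m i * f i r)" for r
  have fmeas0[measurable]: "f i \<in> borel_measurable borel" for i
    unfolding f_def by measurable
  have fmeas: "(\<lambda>r. ennreal (f i r)) \<in> borel_measurable lborel" for i
    by measurable
  have f0: "f i r \<ge> 0" if "i \<in> I" for i r
  proof (cases "r \<in> {d i..R1}")
    case True then have "r > 0" using d0[OF that] by auto
    then show ?thesis unfolding f_def by simp
  qed (simp add: f_def)
  have step1: "ennreal (\<Sum>i\<in>I. m i * Phi n R1 (d i)) = (\<integral>\<^sup>+ r. ennreal (g r) \<partial>lborel)"
  proof -
    have ph: "Phi n R1 (d i) \<ge> 0" if "i \<in> I" for i
      using Phi_nonneg[OF n2 d0[OF that] dR[OF that]] .
    have "ennreal (\<Sum>i\<in>I. m i * Phi n R1 (d i)) = (\<Sum>i\<in>I. ennreal (m i) * ennreal (Phi n R1 (d i)))"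
      using ph m0 by (simp add: sum_ennreal[symmetric] ennreal_mult)
    also have "\<dots> = (\<Sum>i\<in>I. ennreal (m i) * (\<integral>\<^sup>+ r. ennreal (f i r) \<partial>lborel))"
      using Phi_integral[OF n2 d0 dR] unfolding f_def by simp
    also have "\<dots> = (\<Sum>i\<in>I. (\<integral>\<^sup>+ r. ennreal (m i) * ennreal (f i r) \<partial>lborel))"
      using fmeas by (simp add: nn_integral_cmult)
    also have "\<dots> = (\<integral>\<^sup>+ r. (\<Sum>i\<in>I. ennreal (m i) * ennreal (f i r)) \<partial>lborel)"
      using fmeas by (intro nn_integral_sum[symmetric]) measurable
    also have "\<dots> = (\<integral>\<^sup>+ r. ennreal (g r) \<partial>lborel)"
      unfolding g_def using m0 f0 by (intro nn_integral_cong) (simp add: sum_ennreal[symmetric] ennreal_mult)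
    finally show ?thesis .
  qed
  have gmeas: "(\<lambda>r. ennreal (g r)) \<in> borel_measurable borel"
    unfolding g_def f_def by measurable
  have step2: "(\<integral>\<^sup>+ r. ennreal (g r) \<partial>lborel) = ennreal (1/4) * (\<integral>\<^sup>+ x. ennreal (g (x / 4)) \<partial>lborel)"
    using nn_integral_real_affine[OF gmeas, of "1/4" 0] by simp
  have pt: "ennreal (g (x / 4)) \<le> ennreal (B * 4^(n-1)) * (ennreal (h x / x^(n-1)) * indicator {0<..4*R1} x)" for x
  proof (cases "x \<in> {0<..4*R1}")
    case False
    have "f i (x/4) = 0" if "i \<in> I" for i
      using False d0[OF that] unfolding f_def by (auto simp: indicator_def)
    then have "g (x/4) = 0" unfolding g_def by simp
    then show ?thesis by simp
  next
    case True
    define r where "r = x / 4"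
    have r: "0 < r" "r \<le> R1" using True by (auto simp: r_def)
    have hx: "h x > 0" using h_pos True by auto
    define I' where "I' = {i\<in>I. d i \<le> r}"
    have sI': "(\<Sum>i\<in>I'. m i) \<le> B * h (4 * r)"
    proof (cases "I' = {}")
      case True then show ?thesis using B_pos hx by (simp add: r_def)
    next
      case False
      then obtain i0 where "i0 \<in> I'" by auto
      then have rr: "\<rho> \<le> r" using y(1) unfolding I'_def d_def by force
      have fI': "finite I'" using I(1) unfolding I'_def by simp
      have "ennreal (\<Sum>i\<in>I'. m i) = (\<Sum>i\<in>I'. ennreal (m i))"
        using m0 by (simp add: sum_ennreal)
      also have "\<dots> = (\<Sum>i\<in>I'. emeasure \<mu> (D i))"
      proof (rule sum.cong[OF refl])
        fix i assume "i \<in> I'"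
        then have "i \<in> I" unfolding I'_def by simp
        show "ennreal (m i) = emeasure \<mu> (D i)"
          unfolding m_def using emeasure_eq_ennreal_measure[OF I(5)[OF \<open>i \<in> I\<close>, unfolded infinity_ennreal_def]] by simp
      qed
      also have "\<dots> = emeasure \<mu> (\<Union>i\<in>I'. D i)"
        using I(2,3) fI' unfolding I'_def
        by (intro sum_emeasure) (auto intro: disjoint_family_on_mono)
      also have "\<dots> \<le> emeasure \<mu> (K \<inter> ball y (2 * r))"
      proof (intro emeasure_mono Kball_sets subsetI)
        fix p assume "p \<in> (\<Union>i\<in>I'. D i)"
        then obtain i where i: "i \<in> I'" "p \<in> D i" by auto
        then have "dist p (z i) < \<rho>" "d i \<le> r" "p \<in> K" using rho(2) I(4) unfolding I'_def by auto
        moreover have "dist y p \<le> dist y (z i) + dist p (z i)" by (metis dist_commute dist_triangle)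
        ultimately show "p \<in> K \<inter> ball y (2 * r)" using rr unfolding d_def by auto
      qed
      also have "\<dots> \<le> ennreal (B * h (2 * (2 * r)))"
        using r R1 by (intro Kball_le) auto
      finally show ?thesis using B_pos hx by (simp add: r_def)
    qed
    have "g r = (\<Sum>i\<in>I. m i * indicator {d i..R1} r) * (1 / r^(n-1))"
      unfolding g_def f_def by (simp add: sum_divide_distrib)
    also have "\<dots> \<le> (\<Sum>i\<in>I'. m i) * (1 / r^(n-1))"
    proof (intro mult_right_mono)
      have "(\<Sum>i\<in>I. m i * indicator {d i..R1} r) \<le> (\<Sum>i\<in>I. if d i \<le> r then m i else 0)"
        using m0 by (intro sum_mono) (auto simp: indicator_def)
      also have "\<dots> = (\<Sum>i\<in>I'. m i)" unfolding I'_def using I(1) by (simp add: sum.inter_filter)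
      finally show "(\<Sum>i\<in>I. m i * indicator {d i..R1} r) \<le> (\<Sum>i\<in>I'. m i)" .
    qed (use r in simp)
    also have "\<dots> \<le> B * h (4 * r) * (1 / r^(n-1))"
      using sI' r by (intro mult_right_mono) auto
    also have "\<dots> = B * 4^(n-1) * (h x / x^(n-1))"
      unfolding r_def by (simp add: power_divide)
    finally have "g (x/4) \<le> B * 4^(n-1) * (h x / x^(n-1))" unfolding r_def .
    then show ?thesis using True B_pos hx
      by (simp add: ennreal_mult[symmetric] ennreal_leI)
  qed
  have "ennreal (\<Sum>i\<in>I. m i * Phi n R1 (d i)) \<le> ennreal (1/4) * (\<integral>\<^sup>+ x. ennreal (B * 4^(n-1)) * (ennreal (h x / x^(n-1)) * indicator {0<..4*R1} x) \<partial>lborel)"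
    unfolding step1 step2 by (intro mult_left_mono nn_integral_mono pt) auto
  also have "\<dots> \<le> ennreal (1/4) * (ennreal (B * 4^(n-1)) * (\<integral>\<^sup>+ x\<in>{0<..4*R1}. ennreal (h x / x^(n-1)) \<partial>lborel))"
    using B_pos by (intro mult_left_mono nn_integral_cmult_le_any) auto
  also have "\<dots> = ennreal (B * 4^(n-2)) * (\<integral>\<^sup>+ x\<in>{0<..4*R1}. ennreal (h x / x^(n-1)) \<partial>lborel)"
  proof -
    have "n - 1 = Suc (n - 2)" using n2 by simp
    then have "1/4 * (B * 4^(n-1)) = B * 4^(n-2)" by simp
    then show ?thesis using B_pos by (simp add: mult.assoc[symmetric] ennreal_mult[symmetric])
  qed
  finally show ?thesis unfolding n_def m_def d_def .
qed

end

context thm2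
begin

lemma core_fixed:
  fixes r L a :: real
  defines "n \<equiv> DIM('a)"
  defines "K0 \<equiv> 2 * M * B * c ^ (n - 2) / A"
  defines "Cst \<equiv> B * 4^(n-2) * M * ((B/A) * K0)^2 * (c/16)^(n-2)"
  assumes r: "0 < r" "2 * c * (r/4) < \<epsilon>\<^sub>0" "16 * (r/4) < \<epsilon>\<^sub>0" "2 * (r/4) < s1" "16 * (r/4) / c < s1"
    and rO: "cball x0 r \<subseteq> \<Omega>"
    and vL: "\<forall>y\<in>cball x0 r. v y < ereal L"
    and vE: "\<forall>y\<in>(K - N) \<inter> ball x0 r. v y < ereal a"
    and a: "ereal a < v x0"
  shows "v x0 \<le> ereal (L - (L - a) * ((A/2) / 2^(n-1) / Cst))"
proof -
  define s where "s = r / 4"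
  define R1 where "R1 = 4 * s"
  have s0: "s > 0" using r by (simp add: s_def)
  have n2: "n \<ge> 2" using dim by (simp add: n_def)
  have x0O: "x0 \<in> \<Omega>" using rO r by auto
  have aL: "a < L" using vL a r(1) by (metis centre_in_cball dual_order.strict_trans less_eq_real_def less_ereal.simps(1))
  define U where "U = {y\<in>\<Omega>. v y < ereal a}"
  have vusc: "usc_on \<Omega> v" using v_sh unfolding subharmonic_on_def by blast
  have oU: "open U" unfolding U_def by (rule usc_open[OF o\<Omega> vusc])
  have x0U: "x0 \<notin> U" using a unfolding U_def by auto
  define E where "E = (K \<inter> ball x0 s) - N"
  have NB: "N \<in> sets borel" "N \<subseteq> \<Omega>"
    using N_null mu_borel sets_restrict_space_iff[of \<Omega> borel N] o\<Omega> by (auto dest: null_setsD2)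
  have EB: "E \<in> sets borel" unfolding E_def using K_borel NB by auto
  have EO: "E \<subseteq> \<Omega>" unfolding E_def using K_sub by auto
  have EM: "E \<in> sets \<mu>" using sets_mu[OF EB EO] .
  have EU: "E \<subseteq> U"
  proof
    fix y assume "y \<in> E"
    then have "y \<in> (K - N) \<inter> ball x0 r" unfolding E_def s_def using r(1) by auto
    then show "y \<in> U" using vE K_sub unfolding U_def by auto
  qed
  have muE: "emeasure \<mu> E = emeasure \<mu> (K \<inter> ball x0 s)"
    unfolding E_def by (rule emeasure_Diff_null_set[OF N_null Kball_sets])
  have sE0: "s < \<epsilon>\<^sub>0" using r(3) s0 unfolding s_def by linarith
  have Elow: "ennreal (A * h s) \<le> emeasure \<mu> E" using growth x0K s0 sE0 muE by auto
  have Eup: "emeasure \<mu> E \<le> ennreal (B * h s)" using growth x0K s0 sE0 muE by auto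
  have hs: "h s > 0" using h_pos s0 by auto
  have Epos: "0 < emeasure \<mu> E" using Elow A_pos hs
    by (metis ennreal_eq_0_iff linorder_not_le mult_pos_pos not_gr_zero order_le_less_trans zero_less_iff_neq_zero)
  have Efin: "emeasure \<mu> E < \<infinity>" using Eup by (simp add: le_less_trans)
  have VM: "E \<inter> {y. \<exists>r>\<rho>. ball y r \<subseteq> U} \<in> sets \<mu>" for \<rho>
  proof -
    have "E \<inter> {y. \<exists>r>\<rho>. ball y r \<subseteq> U} = E \<inter> ({y. \<exists>r>\<rho>. ball y r \<subseteq> U} \<inter> \<Omega>)" using EO by auto
    moreover have "{y. \<exists>r>\<rho>. ball y r \<subseteq> U} \<inter> \<Omega> \<in> sets \<mu>"
      using open_inner_set[of \<rho> U] o\<Omega> by (intro sets_mu) auto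
    ultimately show ?thesis using EM by auto
  qed
  obtain \<rho> where rho: "\<rho> > 0" "emeasure \<mu> E / 2 < emeasure \<mu> (E \<inter> {y. \<exists>r>\<rho>. ball y r \<subseteq> U})"
    using inner_approx[OF EM EU oU VM Epos Efin] by blast
  define C where "C = E \<inter> {y. \<exists>r>\<rho>. ball y r \<subseteq> U}"
  have CB: "C \<in> sets borel" unfolding C_def using EB open_inner_set[of \<rho> U] by auto
  have CE: "C \<subseteq> E" unfolding C_def by auto
  have Cs: "C \<subseteq> cball x0 s" using CE unfolding E_def by auto
  obtain I :: "nat set" and D :: "nat \<Rightarrow> 'a set" where I: "finite I" "disjoint_family_on D I" "\<And>i. i\<in>I \<Longrightarrow> D i \<in> sets borel"
      "\<And>i. i\<in>I \<Longrightarrow> D i \<noteq> {}" "(\<Union>i\<in>I. D i) = C"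
      "\<And>i p q. i\<in>I \<Longrightarrow> p \<in> D i \<Longrightarrow> q \<in> D i \<Longrightarrow> dist p q < 2 * (\<rho>/2)"
    by (rule finite_partition_small[OF Cs CB half_gt_zero[OF rho(1)]]) simp
  have DC: "D i \<subseteq> C" if "i \<in> I" for i using I(5) that by auto
  have DM: "D i \<in> sets \<mu>" if "i \<in> I" for i using DC[OF that] CE EO I(3)[OF that] by (intro sets_mu) auto
  have DK: "D i \<subseteq> K" if "i \<in> I" for i using DC[OF that] CE unfolding E_def by auto
  have Dfin: "emeasure \<mu> (D i) \<noteq> \<infinity>" if "i \<in> I" for i
  proof -
    have "emeasure \<mu> (D i) \<le> emeasure \<mu> E" using DC[OF that] CE EM by (intro emeasure_mono) auto
    then show ?thesis using Efin by (auto simp: top_unique)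
  qed
  define z where "z i = (SOME p. p \<in> D i)" for i
  have zD: "z i \<in> D i" if "i \<in> I" for i using I(4)[OF that] unfolding z_def by (simp add: some_in_eq)
  have zrho: "dist p (z i) < \<rho>" if "i \<in> I" "p \<in> D i" for i p using I(6)[OF that zD[OF that(1)]] by simp
  have zU: "cball (z i) \<rho> \<subseteq> U" if "i \<in> I" for i
  proof -
    have "z i \<in> C" using zD[OF that] DC[OF that] by auto
    then obtain r' where "r' > \<rho>" "ball (z i) r' \<subseteq> U" unfolding C_def by auto
    moreover have "cball (z i) \<rho> \<subseteq> ball (z i) r'" using \<open>r' > \<rho>\<close> by (auto simp: subset_iff)
    ultimately show ?thesis by blast
  qed
  have zx0: "z i \<noteq> x0" if "i \<in> I" for i
  proof -
    have "z i \<in> cball (z i) \<rho>" using rho(1) by simp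
    then show ?thesis using zU[OF that] x0U by blast
  qed
  have zs: "dist x0 (z i) < s" if "i \<in> I" for i using zD[OF that] DC[OF that] CE unfolding E_def by auto
  define m where "m i = measure \<mu> (D i)" for i
  have m0: "m i \<ge> 0" for i by (simp add: m_def)
  define mC where "mC = (\<Sum>i\<in>I. m i)"
  have mC0: "mC \<ge> 0" unfolding mC_def using m0 by (simp add: sum_nonneg)
  have mCeq: "ennreal mC = emeasure \<mu> C"
  proof -
    have "ennreal mC = (\<Sum>i\<in>I. ennreal (m i))" unfolding mC_def using m0 by (simp add: sum_ennreal)
    also have "\<dots> = (\<Sum>i\<in>I. emeasure \<mu> (D i))"
    proof (rule sum.cong[OF refl])
      fix i assume "i \<in> I"
      show "ennreal (m i) = emeasure \<mu> (D i)"
        unfolding m_def using emeasure_eq_ennreal_measure[OF Dfin[OF \<open>i \<in> I\<close>, unfolded infinity_ennreal_def]] by simp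
    qed
    also have "\<dots> = emeasure \<mu> (\<Union>i\<in>I. D i)"
      using I(1,2) DM by (intro sum_emeasure) auto
    finally show ?thesis using I(5) by simp
  qed
  have mClow: "A * h s / 2 \<le> mC"
  proof -
    have "ennreal (A * h s) / 2 \<le> emeasure \<mu> E / 2" by (rule divide_right_mono_ennreal[OF Elow])
    moreover have "ennreal (A * h s) / 2 = ennreal (A * h s / 2)"
      using A_pos hs by (intro ennreal_divide_numeral) simp
    ultimately have lt: "ennreal (A * h s / 2) < ennreal mC" using rho(2) mCeq unfolding C_def by simp
    show ?thesis
    proof (rule ccontr)
      assume "\<not> ?thesis"
      then have "ennreal mC \<le> ennreal (A * h s / 2)" by (intro ennreal_leI) simp
      with lt show False by simp
    qed
  qed
  define P where "P y = (\<Sum>i\<in>I. m i * Phi n R1 (dist y (z i)))" for y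
  define \<beta> where "\<beta> = mC * Phi n R1 (2 * s)"
  define Upb where "Upb = Cst * h s / s ^ (n - 2)"
  define \<phi> where "\<phi> y = L - (L - a) * ((P y - \<beta>) / Upb)" for y
  define G where "G = ball x0 (3 * s) - (\<Union>i\<in>I. cball (z i) \<rho>)"
  have R1: "R1 = 4 * s" by (simp add: R1_def)
  have K0pos: "K0 > 0" unfolding K0_def using M_pos B_pos A_pos c4 by simp
  have Cstpos: "Cst > 0" unfolding Cst_def using M_pos B_pos A_pos c4 K0pos by simp
  have Upbpos: "Upb > 0" unfolding Upb_def using Cstpos hs s0 by simp
  have s_r: "s = r / 4" by (simp add: s_def)
  have e1: "2 * c * s < \<epsilon>\<^sub>0" using r(2) by (simp only: s_def)
  have e2: "16 * s < \<epsilon>\<^sub>0" using r(3) by (simp only: s_def)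
  have e3: "2 * s < s1" using r(4) by (simp only: s_def)
  have e4: "16 * s / c < s1" using r(5) by (simp only: s_def)
  have cs0: "c * s > 0" using c4 s0 by simp
  define t0 where "t0 = 16 * s / c"
  have t0: "0 < t0" "t0 < s1" "c * t0 = 4 * R1" using s0 c4 e4 unfolding t0_def R1_def by auto
  have ht0: "h t0 \<le> ((B/A) * K0)^2 * h s"
  proof -
    have t0cs: "t0 \<le> c * s"
    proof -
      have cc: "16 \<le> c * c" using mult_mono[of 4 c 4 c] c4 by simp
      have "16 * s \<le> (c * c) * s" using cc s0 by (intro mult_right_mono) auto
      then have "16 * s \<le> c * (c * s)" by (simp add: mult.assoc)
      then show ?thesis unfolding t0_def using c4 by (simp add: divide_le_eq mult.commute)
    qed
    have q1: "A * h t0 \<le> B * h (c * s)" using quasi[OF t0(1) t0cs] e1 cs0 by linarith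
    have d1: "h (c * (2 * s) / 2) \<le> K0 * h (2 * s)"
      using doubling[of "2 * s"] s0 e3 e1 unfolding K0_def n_def by (simp add: mult.commute mult.left_commute)
    have q2: "A * h (2 * s) \<le> B * h (c * s / 2)"
      using quasi[of "2 * s" "c * s / 2"] s0 c4 e1 cs0 by (simp add: field_simps)
    have d2: "h (c * s / 2) \<le> K0 * h s"
      using doubling[of s] s0 e3 e1 cs0 unfolding K0_def n_def by simp
    have hpos: "h (c * s) > 0" "h (2 * s) > 0" "h (c * s / 2) > 0" using h_pos s0 cs0 by auto
    have "h t0 \<le> (B/A) * h (c * s)" using q1 A_pos by (simp add: field_simps)
    also have "\<dots> \<le> (B/A) * (K0 * h (2 * s))"
      using d1 A_pos B_pos by (intro mult_left_mono) simp_all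
    also have "\<dots> \<le> (B/A) * (K0 * ((B/A) * h (c * s / 2)))"
      using q2 A_pos B_pos K0pos by (intro mult_left_mono) (simp_all add: field_simps)
    also have "\<dots> \<le> (B/A) * (K0 * ((B/A) * (K0 * h s)))"
      using d2 A_pos B_pos K0pos by (intro mult_left_mono) simp_all
    finally show ?thesis by (simp add: power2_eq_square mult_ac)
  qed
  have W_def': "\<And>y. (\<forall>i\<in>I. \<rho> \<le> dist y (z i)) \<longleftrightarrow> y \<in> (\<Inter>i\<in>I. {y. \<rho> \<le> dist y (z i)})" by auto
  have Pup: "P y \<le> Upb" if y: "y \<in> cball x0 (3 * s)" "\<forall>i\<in>I. \<rho> \<le> dist y (z i)" for y
  proof -
    have dyR: "dist y (z i) \<le> R1" if "i \<in> I" for i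
    proof -
      have "dist y (z i) \<le> dist y x0 + dist x0 (z i)" by (rule dist_triangle)
      then show ?thesis using y(1) zs[OF that] unfolding R1 by (auto simp: dist_commute)
    qed
    have "ennreal (P y) \<le> ennreal (B * 4^(DIM('a)-2)) * (\<integral>\<^sup>+ t\<in>{0<..4*R1}. ennreal (h t / t^(DIM('a)-1)) \<partial>lborel)"
      unfolding P_def m_def n_def
      by (rule potential_bound[OF I(1) I(2) DM DK Dfin rho(1) zrho]) (use y dyR e2 R1 in auto)
    also have "\<dots> \<le> ennreal (B * 4^(n-2)) * ennreal (M * h t0 / t0 ^ (n - 2))"
      using hc[OF t0(1) t0(2)] unfolding t0(3) n_def by (intro mult_left_mono) auto
    also have "\<dots> = ennreal (B * 4^(n-2) * (M * h t0 / t0 ^ (n - 2)))"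
      by (rule ennreal_mult'[symmetric]) (use B_pos in simp)
    finally have le: "ennreal (P y) \<le> ennreal (B * 4^(n-2) * (M * h t0 / t0 ^ (n - 2)))" .
    have ht0p: "h t0 > 0" using h_pos t0(1) by auto
    have "0 \<le> B * 4^(n-2) * (M * h t0 / t0 ^ (n - 2))" using B_pos M_pos ht0p t0(1) by simp
    with le have "P y \<le> B * 4^(n-2) * (M * h t0 / t0 ^ (n - 2))" by (simp only: ennreal_le_iff)
    also have "\<dots> \<le> B * 4^(n-2) * (M * (((B/A) * K0)^2 * h s) / t0 ^ (n - 2))"
      using ht0 B_pos M_pos t0 by (intro mult_left_mono divide_right_mono) auto
    also have "\<dots> = Upb"
    proof -
      have tp: "t0 ^ (n - 2) = 16 ^ (n - 2) * s ^ (n - 2) / c ^ (n - 2)"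
        unfolding t0_def by (simp add: power_divide power_mult_distrib)
      show ?thesis unfolding Upb_def Cst_def tp using c4 s0
        by (simp add: power_divide field_simps)
    qed
    finally show ?thesis .
  qed
  have Psph: "P y \<le> \<beta>" if "dist x0 y = 3 * s" for y
  proof -
    have "m i * Phi n R1 (dist y (z i)) \<le> m i * Phi n R1 (2 * s)" if "i \<in> I" for i
    proof -
      have "dist x0 y \<le> dist x0 (z i) + dist (z i) y" by (rule dist_triangle)
      then have "2 * s \<le> dist y (z i)" using zs[OF that] \<open>dist x0 y = 3 * s\<close> by (simp add: dist_commute)
      then show ?thesis using Phi_mono[OF n2, of "2 * s" "dist y (z i)" R1] s0 m0
        by (intro mult_left_mono) auto
    qed
    then have "P y \<le> (\<Sum>i\<in>I. m i * Phi n R1 (2 * s))" unfolding P_def by (rule sum_mono)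
    then show ?thesis unfolding \<beta>_def mC_def by (simp add: sum_distrib_right)
  qed
  have Px0: "mC * Phi n R1 s \<le> P x0"
  proof -
    have "m i * Phi n R1 s \<le> m i * Phi n R1 (dist x0 (z i))" if "i \<in> I" for i
      using Phi_mono[OF n2, of "dist x0 (z i)" s R1] zs[OF that] zx0[OF that] m0
      by (intro mult_left_mono) auto
    then have "(\<Sum>i\<in>I. m i * Phi n R1 s) \<le> P x0" unfolding P_def by (rule sum_mono)
    then show ?thesis unfolding mC_def by (simp add: sum_distrib_right)
  qed
  have \<beta>0: "\<beta> \<ge> 0" unfolding \<beta>_def using mC0 Phi_nonneg[OF n2, of "2 * s" R1] s0 R1 by simp
  define \<theta> where "\<theta> = (A/2) / 2^(n-1) / Cst"
  have theta: "\<theta> \<le> (P x0 - \<beta>) / Upb"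
  proof -
    have "s / (2 * s)^(n-1) \<le> Phi n R1 s - Phi n R1 (2 * s)" by (rule Phi_diff[OF n2 s0])
    then have "mC * (s / (2 * s)^(n-1)) \<le> P x0 - \<beta>"
      using Px0 mC0 unfolding \<beta>_def by (smt (verit) mult_left_mono right_diff_distrib)
    moreover have "(A * h s / 2) * (s / (2 * s)^(n-1)) \<le> mC * (s / (2 * s)^(n-1))"
      using mClow s0 by (intro mult_right_mono) auto
    ultimately have lo: "(A * h s / 2) * (s / (2 * s)^(n-1)) \<le> P x0 - \<beta>" by linarith
    have "\<theta> = (A * h s / 2) * (s / (2 * s)^(n-1)) / Upb"
    proof -
      have p1: "(2 * s)^(n-1) = 2^(n-1) * (s * s^(n-2))"
      proof -
        have "n - 1 = Suc (n - 2)" using n2 by simp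
        then show ?thesis by (simp add: power_mult_distrib)
      qed
      show ?thesis unfolding \<theta>_def Upb_def p1 using hs s0 Cstpos A_pos by (simp add: field_simps)
    qed
    moreover have "(A * h s / 2) * (s / (2 * s)^(n-1)) / Upb \<le> (P x0 - \<beta>) / Upb"
      using lo Upbpos by (intro divide_right_mono) auto
    ultimately show ?thesis by simp
  qed
  define Z where "Z = - (z ` I)"
  have oZ: "open Z" unfolding Z_def using I(1) by (simp add: open_Compl finite_imp_closed)
  have harmP: "harmonic_on Z P"
  proof -
    have "harmonic_on Z (\<lambda>y. m i * Phi n R1 (dist y (z i)))" if "i \<in> I" for i
    proof -
      have h1: "harmonic_on Z (\<lambda>y. Phi n R1 (norm (y - z i)))"
        using harmonic_on_subset[OF harmonic_Phi[OF dim, of "z i" R1] oZ] that unfolding Z_def n_def by auto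
      have "harmonic_on Z (\<lambda>y. m i * Phi n R1 (norm (y - z i)) + 0 * 0)"
        by (rule harmonic_on_lin[OF h1 harmonic_on_const[OF oZ]])
      then show ?thesis by (simp add: dist_norm)
    qed
    then show ?thesis unfolding P_def by (intro harmonic_on_sum I(1) oZ)
  qed
  have harm\<phi>: "harmonic_on Z \<phi>"
  proof -
    have "harmonic_on Z (\<lambda>y. 1 * (L + (L - a) * \<beta> / Upb) + (- (L - a) / Upb) * P y)"
      by (rule harmonic_on_lin[OF harmonic_on_const[OF oZ] harmP])
    then show ?thesis
      by (rule harmonic_on_cong) (use Upbpos in \<open>simp add: \<phi>_def field_simps\<close>)
  qed
  have oG: "open G" unfolding G_def using I(1) by (intro open_Diff open_ball closed_UN) auto
  have GZ: "G \<subseteq> Z" unfolding G_def Z_def using rho(1) by auto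
  define W where "W = (\<Inter>i\<in>I. {y. \<rho> \<le> dist y (z i)})"
  have cW: "closed W" unfolding W_def by (intro closed_INT ballI closed_Collect_le continuous_intros) 
  have GW: "G \<subseteq> W" unfolding G_def W_def by (auto simp: dist_commute)
  have clW: "closure G \<subseteq> W" by (rule closure_minimal[OF GW cW])
  have clB: "closure G \<subseteq> cball x0 (3 * s)"
    by (rule closure_minimal) (auto simp: G_def)
  have WZ: "W \<subseteq> Z" unfolding W_def Z_def using rho(1) by force
  have clO: "closure G \<subseteq> \<Omega>"
  proof -
    have "cball x0 (3 * s) \<subseteq> cball x0 r" using s0 s_r by auto
    then show ?thesis using clB rO by auto
  qed
  have cG: "compact (closure G)"
    by (rule compact_closure[THEN iffD2]) (auto simp: G_def intro: bounded_subset[OF bounded_ball])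
  have contphi: "continuous_on (closure G) \<phi>"
    using harmonic_on_continuous[OF harm\<phi>] by (rule continuous_on_subset) (use clW WZ in blast)
  have harmG: "harmonic_on G \<phi>" by (rule harmonic_on_subset[OF harm\<phi> oG GZ])
  have front: "v x \<le> ereal (\<phi> x)" if x: "x \<in> frontier G" for x
  proof -
    have xc: "x \<in> closure G" "x \<notin> G" using x oG by (auto simp: frontier_def interior_open)
    then have xB: "x \<in> cball x0 (3 * s)" and xW: "x \<in> W" using clB clW by auto
    have xr: "x \<in> cball x0 r" using xB s0 s_r by auto
    show ?thesis
    proof (cases "x \<in> ball x0 (3 * s)")
      case True
      then obtain i where i: "i \<in> I" "x \<in> cball (z i) \<rho>" using xc(2) unfolding G_def by auto
      then have "x \<in> U" using zU[OF i(1)] by blast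
      then have va: "v x < ereal a" unfolding U_def by auto
      have "P x \<le> Upb" using Pup[OF xB] xW unfolding W_def by auto
      then have "(P x - \<beta>) / Upb \<le> 1" using \<beta>0 Upbpos by (simp add: divide_le_eq)
      then have "(L - a) * ((P x - \<beta>) / Upb) \<le> (L - a) * 1" using aL by (intro mult_left_mono) auto
      then have "a \<le> \<phi> x" unfolding \<phi>_def by simp
      then show ?thesis using va by (meson ereal_less_eq(3) less_imp_le order_trans)
    next
      case False
      then have "dist x0 x = 3 * s" using xB by auto
      then have "P x \<le> \<beta>" by (rule Psph)
      then have "(P x - \<beta>) / Upb \<le> 0" using Upbpos by (simp add: divide_le_0_iff)
      then have "(L - a) * ((P x - \<beta>) / Upb) \<le> 0" using aL mult_nonneg_nonpos[of "L - a" "(P x - \<beta>) / Upb"] by linarith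
      then have "L \<le> \<phi> x" unfolding \<phi>_def by simp
      then show ?thesis using vL xr by (meson ereal_less_eq(3) less_imp_le order_trans)
    qed
  qed
  have x0G: "x0 \<in> G"
  proof -
    have "x0 \<notin> cball (z i) \<rho>" if "i \<in> I" for i using zU[OF that] x0U by blast
    then show ?thesis unfolding G_def using s0 by auto
  qed
  have "\<forall>x\<in>G. v x \<le> ereal (\<phi> x)"
    using v_sh oG cG clO harmG contphi front unfolding subharmonic_on_def by blast
  then have "v x0 \<le> ereal (\<phi> x0)" using x0G by blast
  also have "\<phi> x0 \<le> L - (L - a) * \<theta>"
  proof -
    have "(L - a) * \<theta> \<le> (L - a) * ((P x0 - \<beta>) / Upb)" using theta aL by (intro mult_left_mono) auto
    then show ?thesis unfolding \<phi>_def by linarith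
  qed
  finally show ?thesis unfolding \<theta>_def by simp
qed

lemma core:
  "\<exists>\<theta>>0. \<forall>r L a. 0 < r \<and> 2 * c * (r/4) < \<epsilon>\<^sub>0 \<and> 16 * (r/4) < \<epsilon>\<^sub>0 \<and> 2 * (r/4) < s1 \<and> 16 * (r/4) / c < s1
     \<and> cball x0 r \<subseteq> \<Omega> \<and> (\<forall>y\<in>cball x0 r. v y < ereal L) \<and> (\<forall>y\<in>(K - N) \<inter> ball x0 r. v y < ereal a)
     \<and> ereal a < v x0 \<longrightarrow> v x0 \<le> ereal (L - (L - a) * \<theta>)"
proof -
  define n where "n = DIM('a)"
  define K0 where "K0 = 2 * M * B * c ^ (n - 2) / A"
  define Cst where "Cst = B * 4^(n-2) * M * ((B/A) * K0)^2 * (c/16)^(n-2)"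
  have K0pos: "K0 > 0" unfolding K0_def using M_pos B_pos A_pos c4 by simp
  have Cstpos: "Cst > 0" unfolding Cst_def using M_pos B_pos A_pos c4 K0pos by simp
  show ?thesis
  proof (intro exI[of _ "(A/2) / 2^(n-1) / Cst"] conjI allI impI)
    show "(A/2) / 2^(n-1) / Cst > 0" using A_pos Cstpos by simp
    fix r L a
    assume H: "0 < r \<and> 2 * c * (r/4) < \<epsilon>\<^sub>0 \<and> 16 * (r/4) < \<epsilon>\<^sub>0 \<and> 2 * (r/4) < s1 \<and> 16 * (r/4) / c < s1
     \<and> cball x0 r \<subseteq> \<Omega> \<and> (\<forall>y\<in>cball x0 r. v y < ereal L) \<and> (\<forall>y\<in>(K - N) \<inter> ball x0 r. v y < ereal a)
     \<and> ereal a < v x0"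
    show "v x0 \<le> ereal (L - (L - a) * ((A/2) / 2^(n-1) / Cst))"
      using core_fixed[of r L a] H unfolding n_def K0_def Cst_def by blast
  qed
qed

end

theorem theorem2:
  fixes \<Omega> K N :: "'a::euclidean_space set"
    and u v :: "'a \<Rightarrow> ereal"
    and h :: "real \<Rightarrow> real"
    and \<mu> :: "'a measure"
  assumes dim: "DIM('a) \<ge> 2"
    and domain: "open \<Omega>" "connected \<Omega>" "\<Omega> \<noteq> {}"
    and u_usc: "usc_on \<Omega> u"
    and v_sh: "subharmonic_on \<Omega> v"
    and K_borel: "K \<in> sets borel" and K_sub: "K \<subseteq> \<Omega>"
    and h_pos: "\<forall>r>0. h r > 0"
    and h_cond: "\<exists>M>0. \<exists>c>4. \<forall>\<^sub>F \<epsilon> in at_right 0.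
        (\<integral>\<^sup>+ r\<in>{0<..c * \<epsilon>}. ennreal (h r / r ^ (DIM('a) - 1)) \<partial>lborel)
          \<le> ennreal (M * h \<epsilon> / \<epsilon> ^ (DIM('a) - 2))"
    and mu_borel: "sets \<mu> = sets (restrict_space borel \<Omega>)"
    and A_pos: "A > 0" and B_pos: "B > 0" and eps0_pos: "\<epsilon>\<^sub>0 > 0"
    and N_sub: "N \<subseteq> K"
    and N_null: "N \<in> null_sets \<mu>"
    and growth: "\<forall>x\<in>K. \<forall>\<epsilon>. 0 < \<epsilon> \<and> \<epsilon> < \<epsilon>\<^sub>0 \<longrightarrow>
        ennreal (A * h \<epsilon>) \<le> emeasure \<mu> (K \<inter> ball x \<epsilon>) \<and>
        emeasure \<mu> (K \<inter> ball x \<epsilon>) \<le> ennreal (B * h \<epsilon>)"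
    and uv: "\<forall>x\<in>K - N. v x \<le> u x"
  shows "\<forall>x\<in>K. v x \<le> u x"
proof
  fix x0 assume x0K: "x0 \<in> K"
  obtain M c where Mc: "M > 0" "c > 4" and ev: "\<forall>\<^sub>F \<epsilon> in at_right 0.
        (\<integral>\<^sup>+ r\<in>{0<..c * \<epsilon>}. ennreal (h r / r ^ (DIM('a) - 1)) \<partial>lborel)
          \<le> ennreal (M * h \<epsilon> / \<epsilon> ^ (DIM('a) - 2))"
    using h_cond by blast
  obtain s1 where s1: "s1 > 0" and hc: "\<And>\<epsilon>. 0 < \<epsilon> \<Longrightarrow> \<epsilon> < s1 \<Longrightarrow>
        (\<integral>\<^sup>+ r\<in>{0<..c * \<epsilon>}. ennreal (h r / r ^ (DIM('a) - 1)) \<partial>lborel)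
          \<le> ennreal (M * h \<epsilon> / \<epsilon> ^ (DIM('a) - 2))"
    using ev unfolding eventually_at_right_field by auto
  interpret thm2 \<Omega> K N v h \<mu> A B \<epsilon>\<^sub>0 M c s1 x0
    by unfold_locales (use assms Mc s1 hc x0K in auto)
  obtain \<theta> where th: "\<theta> > 0" and thc: "\<And>r L a. 0 < r \<Longrightarrow> 2 * c * (r/4) < \<epsilon>\<^sub>0 \<Longrightarrow> 16 * (r/4) < \<epsilon>\<^sub>0
     \<Longrightarrow> 2 * (r/4) < s1 \<Longrightarrow> 16 * (r/4) / c < s1
     \<Longrightarrow> cball x0 r \<subseteq> \<Omega> \<Longrightarrow> (\<forall>y\<in>cball x0 r. v y < ereal L) \<Longrightarrow> (\<forall>y\<in>(K - N) \<inter> ball x0 r. v y < ereal a)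
     \<Longrightarrow> ereal a < v x0 \<Longrightarrow> v x0 \<le> ereal (L - (L - a) * \<theta>)"
    using core by blast
  show "v x0 \<le> u x0"
  proof (rule ccontr)
    assume "\<not> v x0 \<le> u x0"
    then have uv0: "u x0 < v x0" by simp
    have x0O: "x0 \<in> \<Omega>" using x0K K_sub by auto
    have "v x0 \<noteq> \<infinity>" using v_sh x0O unfolding subharmonic_on_def by auto
    moreover have "v x0 \<noteq> -\<infinity>" using uv0 by auto
    ultimately obtain V where V: "v x0 = ereal V" by (cases "v x0") auto
    obtain a where a: "u x0 < ereal a" "ereal a < v x0" using ereal_dense2[OF uv0] by blast
    have aV: "a < V" using a(2) V by simp
    define \<delta> where "\<delta> = \<theta> * (V - a) / 2"
    have \<delta>: "\<delta> > 0" unfolding \<delta>_def using th aV by simp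
    have vusc: "usc_on \<Omega> v" using v_sh unfolding subharmonic_on_def by blast
    have "x0 \<in> {y\<in>\<Omega>. v y < ereal (V + \<delta>)}" using x0O V \<delta> by simp
    then obtain r1 where r1: "r1 > 0" "ball x0 r1 \<subseteq> {y\<in>\<Omega>. v y < ereal (V + \<delta>)}"
      using usc_open[OF domain(1) vusc] open_contains_ball by blast
    have "x0 \<in> {y\<in>\<Omega>. u y < ereal a}" using x0O a(1) by simp
    then obtain r2 where r2: "r2 > 0" "ball x0 r2 \<subseteq> {y\<in>\<Omega>. u y < ereal a}"
      using usc_open[OF domain(1) u_usc] open_contains_ball by blast
    define r where "r = min (min (r1/2) (r2/2)) (min (min (\<epsilon>\<^sub>0/c) (\<epsilon>\<^sub>0/8)) (min s1 (c * s1/8)))"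
    have r0: "r > 0" unfolding r_def using r1 r2 eps0_pos s1 Mc by simp
    have rr: "r \<le> r1/2" "r \<le> r2/2" "r \<le> \<epsilon>\<^sub>0/c" "r \<le> \<epsilon>\<^sub>0/8" "r \<le> s1" "r \<le> c * s1/8"
      unfolding r_def by (simp_all only: min.coboundedI1 min.coboundedI2 min.cobounded1 min.cobounded2)
    have c1: "2 * c * (r/4) < \<epsilon>\<^sub>0"
    proof -
      have "c * r \<le> \<epsilon>\<^sub>0" using rr(3) Mc by (simp add: le_divide_eq mult.commute)
      then show ?thesis using eps0_pos by linarith
    qed
    have c2: "16 * (r/4) < \<epsilon>\<^sub>0" using rr(4) eps0_pos by linarith
    have c3: "2 * (r/4) < s1" using rr(5) s1 r0 by linarith
    have c4': "16 * (r/4) / c < s1"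
    proof -
      have "8 * r \<le> c * s1" using rr(6) by linarith
      then have "4 * r < c * s1" using r0 by linarith
      then show ?thesis using Mc by (simp add: divide_less_eq mult.commute)
    qed
    have cb: "cball x0 r \<subseteq> ball x0 r1" using rr(1) r1 r0 by auto
    have cO: "cball x0 r \<subseteq> \<Omega>" using cb r1 by auto
    have vL: "\<forall>y\<in>cball x0 r. v y < ereal (V + \<delta>)" using cb r1 by auto
    have vE: "\<forall>y\<in>(K - N) \<inter> ball x0 r. v y < ereal a"
    proof
      fix y assume y: "y \<in> (K - N) \<inter> ball x0 r"
      then have "y \<in> ball x0 r2" using rr(2) r2 by auto
      then have "u y < ereal a" using r2 by auto
      moreover have "v y \<le> u y" using uv y by auto
      ultimately show "v y < ereal a" by simp
    qed
    have "v x0 \<le> ereal ((V + \<delta>) - ((V + \<delta>) - a) * \<theta>)"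
      by (rule thc[OF r0 c1 c2 c3 c4' cO vL vE a(2)])
    then have le: "V \<le> (V + \<delta>) - ((V + \<delta>) - a) * \<theta>" using V by simp
    have "((V - a) + \<delta>) * \<theta> \<le> \<delta>" using le by (simp add: algebra_simps)
    then have "(V - a) * \<theta> + \<delta> * \<theta> \<le> \<theta> * (V - a) / 2" unfolding \<delta>_def by (simp add: algebra_simps)
    moreover have "\<delta> * \<theta> > 0" using \<delta> th by simp
    moreover have "(V - a) * \<theta> > 0" using aV th by simp
    ultimately show False by (simp add: algebra_simps)
  qed
qed

end
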